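(* Let $p\geq 1$. For any $y^1,y^2\in D(\mathbb{R}^+,\mathbb{R})$ and any $T\in\mathbb{R}^+$, \[ v_p\Big(\sup_{s\leq\cdot}y^1_s-\sup_{s\leq\cdot}y^2_s\Big)_T\leq v_p(y^1-y^2)_T . \]
   Context: $\mathbb{R}^+=[0,\infty)$. $D(\mathbb{R}^+,\mathbb{R}^m)$ denotes the space of càdlàg functions $x:\mathbb{R}^+\to\mathbb{R}^m$ (right-continuous with left limits). For $x\in D(\mathbb{R}^+,\mathbb{R}^m)$ and $a<b$, $v_p(x)_{[a,b]}=\sup_\pi\sum_{i=1}^n|x_{t_i}-x_{t_{i-1}}|^p$, the supremum being over all subdivisions $\pi=\{a=t_0<\dots<t_n=b\}$, with $|\cdot|$ the Euclidean norm; $v_p(x)_T=v_p(x)_{[0,T]}$. The function $\sup_{s\leq\cdot}y_s$ is $t\mapsto\sup_{s\leq t}y_s$. *)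

theory Defs
  imports "HOL-Analysis.Analysis"
begin

text \<open>Real-valued cadlag functions on the half-line [0,\<infinity>): right-continuous at every
  t \<ge> 0 and having a left limit at every t > 0. Values at negative arguments are irrelevant.\<close>
definition cadlag :: "(real \<Rightarrow> real) \<Rightarrow> bool" where
  "cadlag x \<longleftrightarrow> (\<forall>t\<ge>0. continuous (at_right t) x) \<and>
                  (\<forall>t>0. \<exists>l. (x \<longlongrightarrow> l) (at_left t))"

definition subdivisions :: "real \<Rightarrow> real \<Rightarrow> (nat \<times> (nat \<Rightarrow> real)) set" where
  "subdivisions a b = {(n, t). t 0 = a \<and> t n = b \<and> (\<forall>i<n. t i < t (Suc i))}"

definition pvar :: "real \<Rightarrow> (real \<Rightarrow> real) \<Rightarrow> real \<Rightarrow> real \<Rightarrow> ereal" where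
  "pvar p x a b = (SUP (n, t) \<in> subdivisions a b.
       ereal (\<Sum>i<n. \<bar>x (t (Suc i)) - x (t i)\<bar> powr p))"

definition runsup :: "(real \<Rightarrow> real) \<Rightarrow> real \<Rightarrow> real" where
  "runsup y t = Sup (y ` {0..t})"

end

theory Submission
  imports Defs
begin


lemma powr_superadd:
  fixes a b p :: real
  assumes "p \<ge> 1" "a \<ge> 0" "b \<ge> 0"
  shows "a powr p + b powr p \<le> (a + b) powr p"
proof (cases "a + b = 0")
  case True hence "a = 0" "b = 0" using assms by auto
  then show ?thesis by simp
next
  case False
  hence s: "a + b > 0" using assms by auto
  have k: "u powr p \<le> u" if "0 \<le> u" "u \<le> 1" for u :: real
  proof (cases "u = 0")
    case True then show ?thesis by simp
  next
    case False
    hence "u powr p \<le> u powr 1" using that assms by (intro powr_mono') auto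
    thus ?thesis using that False by simp
  qed
  have "a powr p = (a/(a+b)) powr p * (a+b) powr p" using s assms by (simp add: powr_divide)
  also have "\<dots> \<le> (a/(a+b)) * (a+b) powr p" using k[of "a/(a+b)"] s assms
    by (intro mult_right_mono) auto
  finally have 1: "a powr p \<le> (a/(a+b)) * (a+b) powr p" .
  have "b powr p = (b/(a+b)) powr p * (a+b) powr p" using s assms by (simp add: powr_divide)
  also have "\<dots> \<le> (b/(a+b)) * (a+b) powr p" using k[of "b/(a+b)"] s assms
    by (intro mult_right_mono) auto
  finally have 2: "b powr p \<le> (b/(a+b)) * (a+b) powr p" .
  have "(a/(a+b)) * (a+b) powr p + (b/(a+b)) * (a+b) powr p = (a+b) powr p"
    using s by (simp add: add_divide_distrib[symmetric] distrib_right[symmetric])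
  thus ?thesis using 1 2 by linarith
qed

lemma abs_powr_superadd:
  fixes a b p :: real
  assumes "p \<ge> 1" "a * b \<ge> 0"
  shows "\<bar>a\<bar> powr p + \<bar>b\<bar> powr p \<le> \<bar>a + b\<bar> powr p"
proof -
  have "\<bar>a + b\<bar> = \<bar>a\<bar> + \<bar>b\<bar>" using assms(2)
    by (cases "a \<ge> 0"; cases "b \<ge> 0") (auto simp: mult_less_0_iff zero_le_mult_iff)
  thus ?thesis using powr_superadd[OF assms(1)] by simp
qed

lemma unif_powr:
  fixes p B \<eta> :: real
  assumes "p \<ge> 1" "B \<ge> 0" "\<eta> > 0"
  shows "\<exists>\<delta>>0. \<forall>a h. 0 \<le> a \<longrightarrow> a \<le> B \<longrightarrow> 0 \<le> h \<longrightarrow> h \<le> \<delta> \<longrightarrow> (a + h) powr p \<le> a powr p + \<eta>"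
proof -
  have "continuous_on {0..B+1} (\<lambda>x::real. x powr p)"
    using assms by (intro continuous_on_powr') (auto intro: continuous_intros)
  hence "uniformly_continuous_on {0..B+1} (\<lambda>x::real. x powr p)"
    by (intro compact_uniformly_continuous) auto
  then obtain d where d: "d > 0" "\<And>x x'. x \<in> {0..B+1} \<Longrightarrow> x' \<in> {0..B+1} \<Longrightarrow> dist x' x < d \<Longrightarrow>
      dist (x' powr p) (x powr p) < \<eta>"
    unfolding uniformly_continuous_on_def using assms(3) by metis
  show ?thesis
  proof (intro exI[of _ "min (d/2) 1"] conjI allI impI)
    fix a h :: real assume h: "0 \<le> a" "a \<le> B" "0 \<le> h" "h \<le> min (d/2) 1"
    have "dist ((a+h) powr p) (a powr p) < \<eta>" using h d by (intro d(2)) (auto simp: dist_real_def)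
    thus "(a + h) powr p \<le> a powr p + \<eta>" by (simp add: dist_real_def)
  qed (use d in auto)
qed



lemma cadlag_bdd:
  assumes c: "cadlag y" and T: "T \<ge> 0"
  shows "bdd_above (y ` {0..T})"
proof -
  have loc: "\<exists>d>0. \<exists>B. \<forall>s\<in>{0..T}. dist s t < d \<longrightarrow> y s \<le> B" if t: "t \<in> {0..T}" for t
  proof -
    have "(y \<longlongrightarrow> y t) (at_right t)" using c t unfolding cadlag_def continuous_within by auto
    hence "eventually (\<lambda>s. dist (y s) (y t) < 1) (at_right t)" by (rule tendstoD) simp
    then obtain b where b: "b > t" "\<And>s. s > t \<Longrightarrow> s < b \<Longrightarrow> dist (y s) (y t) < 1"
      using eventually_at_right[of t "t+1"] by auto
    show ?thesis
    proof (cases "t = 0")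
      case True
      show ?thesis
      proof (rule exI[of _ "b - t"], intro conjI exI[of _ "y t + 1"] ballI impI)
        fix s assume s: "s \<in> {0..T}" "dist s t < b - t"
        show "y s \<le> y t + 1"
        proof (cases "s = t")
          case False
          hence "s > t" using s \<open>t = 0\<close> by auto
          thus ?thesis using b(2)[of s] s by (auto simp: dist_real_def)
        next
          case True
          thus ?thesis by simp
        qed
      qed (use b in auto)
    next
      case False
      hence tp: "t > 0" using t by auto
      then obtain l where "(y \<longlongrightarrow> l) (at_left t)" using c unfolding cadlag_def by auto
      hence "eventually (\<lambda>s. dist (y s) l < 1) (at_left t)" by (rule tendstoD) simp
      then obtain a where a: "a < t" "\<And>s. s > a \<Longrightarrow> s < t \<Longrightarrow> dist (y s) l < 1"
        using eventually_at_left[of 0 t] tp by auto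
      show ?thesis
      proof (rule exI[of _ "min (b - t) (t - a)"], intro conjI exI[of _ "max (y t + 1) (l + 1)"] ballI impI)
        fix s assume s: "s \<in> {0..T}" "dist s t < min (b - t) (t - a)"
        show "y s \<le> max (y t + 1) (l + 1)"
        proof (cases "s = t")
          case False
          show ?thesis
          proof (cases "s > t")
            case True
            thus ?thesis using b(2)[of s] s by (auto simp: dist_real_def)
          next
            case False
            hence "s < t" using \<open>s \<noteq> t\<close> by auto
            thus ?thesis using a(2)[of s] s by (auto simp: dist_real_def)
          qed
        qed simp
      qed (use a b in auto)
    qed
  qed
  then obtain d where d: "\<And>t. t \<in> {0..T} \<Longrightarrow> d t > 0 \<and> (\<exists>B. \<forall>s\<in>{0..T}. dist s t < d t \<longrightarrow> y s \<le> B)"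
    by metis
  then obtain B where B: "\<And>t. t \<in> {0..T} \<Longrightarrow> d t > 0 \<and> (\<forall>s\<in>{0..T}. dist s t < d t \<longrightarrow> y s \<le> B t)"
    by metis
  have "compact {0..T}" by simp
  then obtain D where D: "D \<subseteq> {0..T}" "finite D" "{0..T} \<subseteq> (\<Union>t\<in>D. ball t (d t))"
    by (rule compactE_image[of "{0..T}" "{0..T}" "\<lambda>t. ball t (d t)"]) (use B in auto)
  show ?thesis
  proof (rule bdd_aboveI2)
    fix s assume s: "s \<in> {0..T}"
    then obtain t where t: "t \<in> D" "s \<in> ball t (d t)" using D by auto
    hence "y s \<le> B t" using B[of t] D s by (auto simp: dist_commute)
    also have "B t \<le> Max (B ` D)" using t D by auto
    finally show "y s \<le> Max (B ` D)" .
  qed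
qed

lemma runsup_facts:
  assumes "bdd_above (y ` {0..T})" "0 \<le> a" "a \<le> b" "b \<le> T"
  shows "runsup y a \<le> runsup y b" and "\<And>s. 0 \<le> s \<Longrightarrow> s \<le> b \<Longrightarrow> y s \<le> runsup y b"
    and "\<And>e. e > 0 \<Longrightarrow> \<exists>u. 0 \<le> u \<and> u \<le> b \<and> runsup y b - e < y u"
proof -
  have bb: "bdd_above (y ` {0..b})" using assms(1) by (rule bdd_above_mono) (use assms in auto)
  show "runsup y a \<le> runsup y b" unfolding runsup_def
    using assms bb by (intro cSup_subset_mono) auto
  show "\<And>s. 0 \<le> s \<Longrightarrow> s \<le> b \<Longrightarrow> y s \<le> runsup y b" unfolding runsup_def
    using bb by (intro cSup_upper) auto
  fix e :: real assume "e > 0"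
  hence "runsup y b - e < Sup (y ` {0..b})" unfolding runsup_def by simp
  then obtain v where "v \<in> y ` {0..b}" "runsup y b - e < v"
    using less_cSup_iff[of "y ` {0..b}"] bb assms by auto
  thus "\<exists>u. 0 \<le> u \<and> u \<le> b \<and> runsup y b - e < y u" by auto
qed

lemma close_up:
  assumes b1: "bdd_above (y1 ` {0..T})" and b2: "bdd_above (y2 ` {0..T})"
    and ab: "0 \<le> a" "a \<le> b" "b \<le> T" and inc: "runsup y1 a - runsup y2 a < runsup y1 b - runsup y2 b"
    and e: "e > 0"
  shows "\<exists>u. a < u \<and> u \<le> b \<and> runsup y1 b - runsup y2 b \<le> y1 u - y2 u + e"
proof -
  have m2: "runsup y2 a \<le> runsup y2 b" using runsup_facts(1)[OF b2 ab] .
  have gap: "runsup y1 b - runsup y1 a > 0" using inc m2 by linarith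
  define e' where "e' = min e (runsup y1 b - runsup y1 a)"
  have "e' > 0" using e gap by (simp add: e'_def)
  then obtain u where u: "0 \<le> u" "u \<le> b" "runsup y1 b - e' < y1 u"
    using runsup_facts(3)[OF b1 ab] by blast
  have "a < u"
  proof (rule ccontr)
    assume "\<not> a < u"
    hence "y1 u \<le> runsup y1 a" using runsup_facts(2)[OF b1 order_refl ab(1) order_trans[OF ab(2,3)]] u by auto
    thus False using u(3) by (simp add: e'_def)
  qed
  moreover have "y2 u \<le> runsup y2 b" using runsup_facts(2)[OF b2 ab] u by auto
  ultimately show ?thesis using u \<open>e' > 0\<close> unfolding e'_def
    by (intro exI[of _ u]) linarith
qed



lemma strict_chain:
  fixes t :: "nat \<Rightarrow> real"
  assumes "\<forall>i<n. t i < t (Suc i)" "i < j" "j \<le> n"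
  shows "t i < t j"
  using assms(2,3)
proof (induction j)
  case 0 then show ?case by simp
next
  case (Suc j)
  show ?case
  proof (cases "i = j")
    case True then show ?thesis using assms(1) Suc by auto
  next
    case False
    hence "t i < t j" using Suc by auto
    also have "t j < t (Suc j)" using assms(1) Suc by auto
    finally show ?thesis .
  qed
qed

lemma weak_chain:
  fixes t :: "nat \<Rightarrow> real"
  assumes "\<forall>i<n. t i < t (Suc i)" "i \<le> j" "j \<le> n"
  shows "t i \<le> t j"
  using strict_chain[OF assms(1), of i j] assms by (cases "i = j") auto

lemma chain_main:
  fixes z x :: "real \<Rightarrow> real" and t :: "nat \<Rightarrow> real"
  assumes p: "p \<ge> 1" and e: "\<epsilon> > 0"
    and tmono: "\<forall>i<n. t i < t (Suc i)" and t0: "t 0 = 0" and tT: "t n \<le> T"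
    and z0: "z 0 = x 0"
    and up: "\<And>a b. 0 \<le> a \<Longrightarrow> a < b \<Longrightarrow> b \<le> T \<Longrightarrow> z a < z b \<Longrightarrow> \<exists>u. a < u \<and> u \<le> b \<and> z b \<le> x u + \<epsilon>"
    and dn: "\<And>a b. 0 \<le> a \<Longrightarrow> a < b \<Longrightarrow> b \<le> T \<Longrightarrow> z b < z a \<Longrightarrow> \<exists>u. a < u \<and> u \<le> b \<and> x u - \<epsilon> \<le> z b"
  shows "\<exists>m c. c 0 = 0 \<and> (\<forall>j<m. c j < c (Suc j)) \<and> c m \<le> t n \<and> m \<le> n \<and>
     (\<Sum>i<n. \<bar>z (t (Suc i)) - z (t i)\<bar> powr p) \<le> (\<Sum>j<m. (\<bar>x (c (Suc j)) - x (c j)\<bar> + 2*\<epsilon>) powr p)"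
proof -
  define D where "D = (\<lambda>i. \<bar>z (t (Suc i)) - z (t i)\<bar> powr p)"
  define C where "C = (\<lambda>m (c::nat \<Rightarrow> real). (\<Sum>j<m. (\<bar>x (c (Suc j)) - x (c j)\<bar> + 2*\<epsilon>) powr p))"
  have tle: "t i \<le> t j" if "i \<le> j" "j \<le> n" for i j using weak_chain[OF tmono that] .
  have tlt: "t i < t j" if "i < j" "j \<le> n" for i j using strict_chain[OF tmono that] .
  have t0le: "0 \<le> t i" if "i \<le> n" for i using tle[of 0 i] that t0 by auto
  have tleT: "t i \<le> T" if "i \<le> n" for i using tle[of i n] that tT by auto
  have Cext: "C (Suc m) (c(Suc m := u)) = C m c + (\<bar>x u - x (c m)\<bar> + 2*\<epsilon>) powr p" for m c u
  proof -
    have "(\<Sum>j<m. (\<bar>x ((c(Suc m := u)) (Suc j)) - x ((c(Suc m := u)) j)\<bar> + 2*\<epsilon>) powr p) = C m c"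
      unfolding C_def by (intro sum.cong) auto
    thus ?thesis unfolding C_def by simp
  qed
  have close1: "\<exists>u. t r < u \<and> u \<le> t k \<and> z (t k) \<le> x u + \<epsilon> \<and>
      C m c + \<bar>z (t k) - z (t r)\<bar> powr p \<le> C (Suc m) (c(Suc m := u)) \<and>
      (\<forall>j<Suc m. (c(Suc m := u)) j < (c(Suc m := u)) (Suc j)) \<and> (c(Suc m := u)) 0 = c 0"
    if asm: "k \<le> n" "r < k" "c m \<le> t r" "\<forall>j<m. c j < c (Suc j)" "z (t r) < z (t k)"
       "x (c m) - \<epsilon> \<le> z (t r)" for m c r k
  proof -
    obtain u where u: "t r < u" "u \<le> t k" "z (t k) \<le> x u + \<epsilon>"
      using up[of "t r" "t k"] asm t0le[of r] tleT[of k] tlt[of r k] by auto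
    have "\<bar>z (t k) - z (t r)\<bar> powr p \<le> (\<bar>x u - x (c m)\<bar> + 2*\<epsilon>) powr p"
      using asm u p by (intro powr_mono2) auto
    moreover have "\<forall>j<Suc m. (c(Suc m := u)) j < (c(Suc m := u)) (Suc j)"
    proof (intro allI impI)
      fix j assume "j < Suc m"
      thus "(c(Suc m := u)) j < (c(Suc m := u)) (Suc j)"
        using asm u by (cases "j = m") auto
    qed
    ultimately show ?thesis using u Cext by (intro exI[of _ u]) auto
  qed
  have close2: "\<exists>u. t r < u \<and> u \<le> t k \<and> x u - \<epsilon> \<le> z (t k) \<and>
      C m c + \<bar>z (t k) - z (t r)\<bar> powr p \<le> C (Suc m) (c(Suc m := u)) \<and>
      (\<forall>j<Suc m. (c(Suc m := u)) j < (c(Suc m := u)) (Suc j)) \<and> (c(Suc m := u)) 0 = c 0"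
    if asm: "k \<le> n" "r < k" "c m \<le> t r" "\<forall>j<m. c j < c (Suc j)" "z (t k) < z (t r)"
       "z (t r) \<le> x (c m) + \<epsilon>" for m c r k
  proof -
    obtain u where u: "t r < u" "u \<le> t k" "x u - \<epsilon> \<le> z (t k)"
      using dn[of "t r" "t k"] asm t0le[of r] tleT[of k] tlt[of r k] by auto
    have "\<bar>z (t k) - z (t r)\<bar> powr p \<le> (\<bar>x u - x (c m)\<bar> + 2*\<epsilon>) powr p"
      using asm u p by (intro powr_mono2) auto
    moreover have "\<forall>j<Suc m. (c(Suc m := u)) j < (c(Suc m := u)) (Suc j)"
    proof (intro allI impI)
      fix j assume "j < Suc m"
      thus "(c(Suc m := u)) j < (c(Suc m := u)) (Suc j)"
        using asm u by (cases "j = m") auto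
    qed
    ultimately show ?thesis using u Cext by (intro exI[of _ u]) auto
  qed
  have inv: "\<exists>m c r md. c 0 = 0 \<and> (\<forall>j<m. c j < c (Suc j)) \<and> r \<le> k \<and> m \<le> r \<and> c m \<le> t r \<and>
     (\<Sum>i<k. D i) \<le> C m c + \<bar>z (t k) - z (t r)\<bar> powr p \<and> md \<le> (2::nat) \<and>
     (md = 0 \<longrightarrow> z (t k) = z (t r) \<and> z (t r) = x (c m)) \<and>
     (md = 1 \<longrightarrow> r < k \<and> z (t r) < z (t k) \<and> x (c m) - \<epsilon> \<le> z (t r)) \<and>
     (md = 2 \<longrightarrow> r < k \<and> z (t k) < z (t r) \<and> z (t r) \<le> x (c m) + \<epsilon>)" if "k \<le> n" for k
    using that
  proof (induction k)
    case 0
    show ?case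
      by (rule exI[of _ 0], rule exI[of _ "\<lambda>_. 0"], rule exI[of _ 0], rule exI[of _ 0])
         (simp add: C_def t0 z0)
  next
    case (Suc k)
    then obtain m c r md where st: "c 0 = 0" "\<forall>j<m. c j < c (Suc j)" "r \<le> k" "m \<le> r" "c m \<le> t r"
      "(\<Sum>i<k. D i) \<le> C m c + \<bar>z (t k) - z (t r)\<bar> powr p" "md \<le> (2::nat)"
      "md = 0 \<longrightarrow> z (t k) = z (t r) \<and> z (t r) = x (c m)"
      "md = 1 \<longrightarrow> r < k \<and> z (t r) < z (t k) \<and> x (c m) - \<epsilon> \<le> z (t r)"
      "md = 2 \<longrightarrow> r < k \<and> z (t k) < z (t r) \<and> z (t r) \<le> x (c m) + \<epsilon>" by auto
    have sumS: "(\<Sum>i<Suc k. D i) = (\<Sum>i<k. D i) + \<bar>z (t (Suc k)) - z (t k)\<bar> powr p"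
      by (simp add: D_def)
    have ctk: "c m \<le> t k" using st tle[of r k] Suc by auto
    consider "md = 0" | "md = 1" | "md = 2" using st(7) by linarith
    then show ?case
    proof cases
      case 1
      hence eq: "z (t k) = z (t r)" "z (t r) = x (c m)" using st by auto
      consider "z (t (Suc k)) = z (t k)" | "z (t (Suc k)) > z (t k)" | "z (t (Suc k)) < z (t k)" by linarith
      then show ?thesis
      proof cases
        case 1
        show ?thesis
          by (rule exI[of _ m], rule exI[of _ c], rule exI[of _ r], rule exI[of _ 0])
             (use st eq 1 sumS in auto)
      next
        case 2
        show ?thesis
          by (rule exI[of _ m], rule exI[of _ c], rule exI[of _ k], rule exI[of _ 1])
             (use st eq 2 sumS ctk e in auto)
      next
        case 3
        show ?thesis
          by (rule exI[of _ m], rule exI[of _ c], rule exI[of _ k], rule exI[of _ 2])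
             (use st eq 3 sumS ctk e in auto)
      qed
    next
      case 2
      hence s1: "r < k" "z (t r) < z (t k)" "x (c m) - \<epsilon> \<le> z (t r)" using st by auto
      show ?thesis
      proof (cases "z (t (Suc k)) \<ge> z (t k)")
        case True
        have "\<bar>z (t k) - z (t r)\<bar> powr p + \<bar>z (t (Suc k)) - z (t k)\<bar> powr p \<le> \<bar>z (t (Suc k)) - z (t r)\<bar> powr p"
          using abs_powr_superadd[OF p, of "z (t k) - z (t r)" "z (t (Suc k)) - z (t k)"] s1 True by auto
        thus ?thesis
          by (rule_tac exI[of _ m], rule_tac exI[of _ c], rule_tac exI[of _ r], rule_tac exI[of _ 1])
             (use st s1 True sumS in auto)
      next
        case False
        obtain u where u: "t r < u" "u \<le> t k" "z (t k) \<le> x u + \<epsilon>"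
          "C m c + \<bar>z (t k) - z (t r)\<bar> powr p \<le> C (Suc m) (c(Suc m := u))"
          "\<forall>j<Suc m. (c(Suc m := u)) j < (c(Suc m := u)) (Suc j)" "(c(Suc m := u)) 0 = c 0"
          using close1[of k r c m] Suc s1 st by auto
        have ss: "(\<Sum>i<Suc k. D i) \<le> C (Suc m) (c(Suc m := u)) + \<bar>z (t (Suc k)) - z (t k)\<bar> powr p"
          using sumS st(6) u(4) by linarith
        show ?thesis
          by (rule exI[of _ "Suc m"], rule exI[of _ "c(Suc m := u)"], rule exI[of _ k], rule exI[of _ 2])
             (use st s1 False ss u in \<open>auto simp del: fun_upd_apply simp: fun_upd_same\<close>)
      qed
    next
      case 3
      hence s1: "r < k" "z (t k) < z (t r)" "z (t r) \<le> x (c m) + \<epsilon>" using st by auto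
      show ?thesis
      proof (cases "z (t (Suc k)) \<le> z (t k)")
        case True
        have "\<bar>z (t k) - z (t r)\<bar> powr p + \<bar>z (t (Suc k)) - z (t k)\<bar> powr p \<le> \<bar>z (t (Suc k)) - z (t r)\<bar> powr p"
          using abs_powr_superadd[OF p, of "z (t k) - z (t r)" "z (t (Suc k)) - z (t k)"] s1 True
          by (auto simp: mult_nonpos_nonpos)
        thus ?thesis
          by (rule_tac exI[of _ m], rule_tac exI[of _ c], rule_tac exI[of _ r], rule_tac exI[of _ 2])
             (use st s1 True sumS in auto)
      next
        case False
        obtain u where u: "t r < u" "u \<le> t k" "x u - \<epsilon> \<le> z (t k)"
          "C m c + \<bar>z (t k) - z (t r)\<bar> powr p \<le> C (Suc m) (c(Suc m := u))"
          "\<forall>j<Suc m. (c(Suc m := u)) j < (c(Suc m := u)) (Suc j)" "(c(Suc m := u)) 0 = c 0"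
          using close2[of k r c m] Suc s1 st by auto
        have ss: "(\<Sum>i<Suc k. D i) \<le> C (Suc m) (c(Suc m := u)) + \<bar>z (t (Suc k)) - z (t k)\<bar> powr p"
          using sumS st(6) u(4) by linarith
        show ?thesis
          by (rule exI[of _ "Suc m"], rule exI[of _ "c(Suc m := u)"], rule exI[of _ k], rule exI[of _ 1])
             (use st s1 False ss u in \<open>auto simp del: fun_upd_apply simp: fun_upd_same\<close>)
      qed
    qed
  qed
  obtain m c r md where st: "c 0 = 0" "\<forall>j<m. c j < c (Suc j)" "r \<le> n" "m \<le> r" "c m \<le> t r"
      "(\<Sum>i<n. D i) \<le> C m c + \<bar>z (t n) - z (t r)\<bar> powr p" "md \<le> (2::nat)"
      "md = 0 \<longrightarrow> z (t n) = z (t r) \<and> z (t r) = x (c m)"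
      "md = 1 \<longrightarrow> r < n \<and> z (t r) < z (t n) \<and> x (c m) - \<epsilon> \<le> z (t r)"
      "md = 2 \<longrightarrow> r < n \<and> z (t n) < z (t r) \<and> z (t r) \<le> x (c m) + \<epsilon>"
    using inv[of n] by auto
  have ctn: "c m \<le> t n" using st tle[of r n] by auto
  consider "md = 0" | "md = 1" | "md = 2" using st(7) by linarith
  then show ?thesis
  proof cases
    case 1
    thus ?thesis using st ctn unfolding D_def C_def by (intro exI[of _ m] exI[of _ c]) auto
  next
    case 2
    obtain u where u: "t r < u" "u \<le> t n"
      "C m c + \<bar>z (t n) - z (t r)\<bar> powr p \<le> C (Suc m) (c(Suc m := u))"
      "\<forall>j<Suc m. (c(Suc m := u)) j < (c(Suc m := u)) (Suc j)" "(c(Suc m := u)) 0 = c 0"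
      using close1[of n r c m] st 2 by auto
    show ?thesis
      by (rule exI[of _ "Suc m"], rule exI[of _ "c(Suc m := u)"])
         (use st u 2 in \<open>auto simp: D_def C_def\<close>)
  next
    case 3
    obtain u where u: "t r < u" "u \<le> t n"
      "C m c + \<bar>z (t n) - z (t r)\<bar> powr p \<le> C (Suc m) (c(Suc m := u))"
      "\<forall>j<Suc m. (c(Suc m := u)) j < (c(Suc m := u)) (Suc j)" "(c(Suc m := u)) 0 = c 0"
      using close2[of n r c m] st 3 by auto
    show ?thesis
      by (rule exI[of _ "Suc m"], rule exI[of _ "c(Suc m := u)"])
         (use st u 3 in \<open>auto simp: D_def C_def\<close>)
  qed
qed



lemma chain_le_pvar:
  fixes x :: "real \<Rightarrow> real" and c :: "nat \<Rightarrow> real"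
  assumes "c 0 = 0" "\<forall>j<m. c j < c (Suc j)" "c m \<le> T"
  shows "ereal (\<Sum>j<m. \<bar>x (c (Suc j)) - x (c j)\<bar> powr p) \<le> pvar p x 0 T"
proof (cases "c m = T")
  case True
  hence "(m, c) \<in> subdivisions 0 T" using assms unfolding subdivisions_def by auto
  thus ?thesis unfolding pvar_def by (rule SUP_upper2) simp
next
  case False
  hence lt: "c m < T" using assms by auto
  define c' where "c' = c(Suc m := T)"
  have "(Suc m, c') \<in> subdivisions 0 T" using assms lt unfolding subdivisions_def c'_def
    by (auto simp: less_Suc_eq)
  moreover have "(\<Sum>j<m. \<bar>x (c (Suc j)) - x (c j)\<bar> powr p) \<le> (\<Sum>j<Suc m. \<bar>x (c' (Suc j)) - x (c' j)\<bar> powr p)"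
  proof -
    have "(\<Sum>j<m. \<bar>x (c' (Suc j)) - x (c' j)\<bar> powr p) = (\<Sum>j<m. \<bar>x (c (Suc j)) - x (c j)\<bar> powr p)"
      unfolding c'_def by (intro sum.cong) auto
    thus ?thesis by simp
  qed
  ultimately show ?thesis unfolding pvar_def
    by (intro SUP_upper2[of "(Suc m, c')"]) auto
qed

theorem theorem1:
  fixes p T :: real and y1 y2 :: "real \<Rightarrow> real"
  assumes "p \<ge> 1" and "cadlag y1" and "cadlag y2" and "T \<ge> 0"
  shows "pvar p (\<lambda>t. runsup y1 t - runsup y2 t) 0 T \<le> pvar p (\<lambda>t. y1 t - y2 t) 0 T"
proof -
  define z where "z = (\<lambda>t. runsup y1 t - runsup y2 t)"
  define x where "x = (\<lambda>t. y1 t - y2 t)"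
  define V where "V = pvar p x 0 T"
  have p: "p \<ge> 1" using assms by simp
  have b1: "bdd_above (y1 ` {0..T})" by (rule cadlag_bdd) (use assms in auto)
  have b2: "bdd_above (y2 ` {0..T})" by (rule cadlag_bdd) (use assms in auto)
  have z0: "z 0 = x 0" unfolding z_def x_def runsup_def by simp
  have up: "\<exists>u. a < u \<and> u \<le> b \<and> z b \<le> x u + e"
    if "0 \<le> a" "a < b" "b \<le> T" "z a < z b" "e > 0" for a b e
    using close_up[OF b1 b2, of a b e] that unfolding z_def x_def by auto
  have dn: "\<exists>u. a < u \<and> u \<le> b \<and> x u - e \<le> z b"
    if "0 \<le> a" "a < b" "b \<le> T" "z b < z a" "e > 0" for a b e
    using close_up[OF b2 b1, of a b e] that unfolding z_def x_def by fastforce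
  have main: "ereal (\<Sum>i<n. \<bar>z (t (Suc i)) - z (t i)\<bar> powr p) \<le> V"
    if nt: "(n, t) \<in> subdivisions 0 T" for n t
  proof -
    have t: "t 0 = 0" "t n = T" "\<forall>i<n. t i < t (Suc i)" using nt unfolding subdivisions_def by auto
    have "ereal (\<Sum>i<n. \<bar>x (t (Suc i)) - x (t i)\<bar> powr p) \<le> V"
      using chain_le_pvar[of t n T x p] t unfolding V_def by auto
    moreover have "0 \<le> (\<Sum>i<n. \<bar>x (t (Suc i)) - x (t i)\<bar> powr p)" by (intro sum_nonneg) auto
    ultimately have V0: "ereal 0 \<le> V" by (meson order_trans ereal_less_eq(3))
    show ?thesis
    proof (cases "V = \<infinity>")
      case True then show ?thesis by simp
    next
      case False
      then obtain v where v: "V = ereal v" using V0 by (cases V) auto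
      have "(\<Sum>i<n. \<bar>z (t (Suc i)) - z (t i)\<bar> powr p) \<le> v"
      proof (rule field_le_epsilon)
        fix \<eta> :: real assume eta: "\<eta> > 0"
        define \<eta>' where "\<eta>' = \<eta> / (real n + 1)"
        have eta': "\<eta>' > 0" using eta by (simp add: \<eta>'_def)
        obtain \<delta> where d: "\<delta> > 0" "\<And>a h. 0 \<le> a \<Longrightarrow> a \<le> max 1 v \<Longrightarrow> 0 \<le> h \<Longrightarrow> h \<le> \<delta> \<Longrightarrow>
            (a + h) powr p \<le> a powr p + \<eta>'"
          using unif_powr[OF p, of "max 1 v" \<eta>'] eta' by (auto simp del: max.bounded_iff) (meson le_max_iff_disj zero_le_one)
        define \<epsilon> where "\<epsilon> = \<delta> / 2"
        have e: "\<epsilon> > 0" using d by (simp add: \<epsilon>_def)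
        obtain m c where mc: "c 0 = 0" "\<forall>j<m. c j < c (Suc j)" "c m \<le> t n" "m \<le> n"
          "(\<Sum>i<n. \<bar>z (t (Suc i)) - z (t i)\<bar> powr p) \<le> (\<Sum>j<m. (\<bar>x (c (Suc j)) - x (c j)\<bar> + 2*\<epsilon>) powr p)"
          using chain_main[OF p e t(3) t(1), of T z x] t(2) z0 up[OF _ _ _ _ e] dn[OF _ _ _ _ e] by auto
        define a where "a = (\<lambda>j. \<bar>x (c (Suc j)) - x (c j)\<bar>)"
        have sa: "(\<Sum>j<m. a j powr p) \<le> v"
          using chain_le_pvar[of c m T x p] mc t(2) v unfolding V_def a_def by auto
        have aB: "a j \<le> max 1 v" if "j < m" for j
        proof (cases "a j \<le> 1")
          case False
          have "a j = a j powr 1" using False by simp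
          also have "\<dots> \<le> a j powr p" using False p by (intro powr_mono) auto
          also have "\<dots> \<le> (\<Sum>j<m. a j powr p)" using that by (intro member_le_sum) auto
          finally show ?thesis using sa by linarith
        qed simp
        have "(\<Sum>j<m. (a j + 2*\<epsilon>) powr p) \<le> (\<Sum>j<m. a j powr p + \<eta>')"
          using aB e by (intro sum_mono d(2)) (auto simp: a_def \<epsilon>_def)
        also have "\<dots> = (\<Sum>j<m. a j powr p) + real m * \<eta>'" by (simp add: sum.distrib)
        also have "\<dots> \<le> v + real n * \<eta>'" using sa mc(4) eta' by (intro add_mono mult_right_mono) auto
        also have "\<dots> \<le> v + \<eta>"
        proof -
          have "real n * \<eta>' = \<eta> * (real n / (real n + 1))" by (simp add: \<eta>'_def)
          also have "\<dots> \<le> \<eta> * 1" using eta by (intro mult_left_mono) auto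
          finally show ?thesis by simp
        qed
        finally show "(\<Sum>i<n. \<bar>z (t (Suc i)) - z (t i)\<bar> powr p) \<le> v + \<eta>"
          using mc(5) unfolding a_def by linarith
      qed
      thus ?thesis using v by simp
    qed
  qed
  show ?thesis unfolding z_def[symmetric] x_def[symmetric] V_def[symmetric]
    unfolding pvar_def[of p z] by (rule SUP_least) (use main in auto)
qed

end
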